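(* For integers $a\ge 1$ and $n\ge 2$, the modified wheel graph $\overline{W}_n$ satisfies $$t(\overline{W}_n)=a\,W_{n-1}(a).$$ In particular, for $a=1$, $t(W_n)=L_{2n}-2$, where $L_k$ is the $k$-th Lucas number.
   Context: $t(H)$ is the number of spanning trees of $H$. The cycle graph $C_n$ ($n\ge 2$) has vertices $p_1,\dots,p_n$ and edges joining $p_i$ to $p_{i+1}$ (indices mod $n$; $C_2$ has two parallel edges). The modified wheel graph $\overline{W}_n$ is obtained from $C_n$ by adding a new vertex $p$ joined to each vertex $p_j$ by $a\ge 1$ parallel edges; for $a=1$ it is the wheel graph $W_n$. The polynomials $W_n(x)$ are defined by $W_0(x)=1$, $W_1(x)=x+4$, $W_n(x)=(x+2)W_{n-1}(x)-W_{n-2}(x)+2$ for $n\ge 2$. Lucas numbers: $L_1=1$, $L_2=3$, $L_k=L_{k-1}+L_{k-2}$. *)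

theory Defs
  imports Main
begin

text \<open>Finite multigraphs: a vertex set V, an edge set E of edge labels, and an
endpoint map ends, where ends e is the set of the (two) endpoints of edge e.
Parallel edges are distinct labels with the same endpoints.\<close>

definition adj_rel :: "('e \<Rightarrow> 'v set) \<Rightarrow> 'e set \<Rightarrow> ('v \<times> 'v) set" where
  "adj_rel ends T = {(u, v). \<exists>e\<in>T. ends e = {u, v}}"

text \<open>T is a spanning tree of (V,E,ends): T is a set of edges of the graph, the
spanning subgraph (V,T) is connected, and it is acyclic (every edge of T is a
bridge of (V,T), i.e. its endpoints are not joined by a path avoiding it).\<close>
definition spanning_tree :: "'v set \<Rightarrow> 'e set \<Rightarrow> ('e \<Rightarrow> 'v set) \<Rightarrow> 'e set \<Rightarrow> bool" where
  "spanning_tree V E ends T \<longleftrightarrow>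
     T \<subseteq> E \<and>
     (\<forall>u\<in>V. \<forall>v\<in>V. (u, v) \<in> (adj_rel ends T)\<^sup>*) \<and>
     (\<forall>e\<in>T. \<forall>u v. ends e = {u, v} \<longrightarrow> (u, v) \<notin> (adj_rel ends (T - {e}))\<^sup>*)"

definition num_spanning_trees :: "'v set \<Rightarrow> 'e set \<Rightarrow> ('e \<Rightarrow> 'v set) \<Rightarrow> nat" where
  "num_spanning_trees V E ends = card {T. spanning_tree V E ends T}"

text \<open>Modified wheel graph: hub vertex None (= p), rim vertices Some j, j < n
(Some j = p_(j+1)). Cycle edges Inl j (j < n) join Some j and Some ((j+1) mod n)
(for n = 2 these are two parallel edges); spoke edges Inr (j,k), j < n, k < a,
join None and Some j (a parallel edges per rim vertex).\<close>
definition mwheel_V :: "nat \<Rightarrow> nat option set" where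
  "mwheel_V n = insert None (Some ` {..<n})"

definition mwheel_E :: "nat \<Rightarrow> nat \<Rightarrow> (nat + nat \<times> nat) set" where
  "mwheel_E n a = Inl ` {..<n} \<union> Inr ` ({..<n} \<times> {..<a})"

fun mwheel_ends :: "nat \<Rightarrow> (nat + nat \<times> nat) \<Rightarrow> nat option set" where
  "mwheel_ends n (Inl j) = {Some j, Some ((j + 1) mod n)}"
| "mwheel_ends n (Inr (j, k)) = {None, Some j}"

fun Wpoly :: "nat \<Rightarrow> int \<Rightarrow> int" where
  "Wpoly 0 x = 1"
| "Wpoly (Suc 0) x = x + 4"
| "Wpoly (Suc (Suc n)) x = (x + 2) * Wpoly (Suc n) x - Wpoly n x + 2"

fun lucas :: "nat \<Rightarrow> int" where
  "lucas 0 = 2"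
| "lucas (Suc 0) = 1"
| "lucas (Suc (Suc k)) = lucas (Suc k) + lucas k"

end

theory Submission
  imports Defs
begin

definition dd :: "nat \<Rightarrow> (nat \<Rightarrow> bool) \<Rightarrow> nat \<Rightarrow> nat" where
  "dd n c j = (LEAST k. \<not> c ((j + k) mod n))"
definition ee :: "nat \<Rightarrow> (nat \<Rightarrow> bool) \<Rightarrow> nat \<Rightarrow> nat" where
  "ee n c j = (j + dd n c j) mod n"

context
  fixes n :: nat and c :: "nat \<Rightarrow> bool"
  assumes n2: "2 \<le> n" and cut: "\<exists>m<n. \<not> c m"
begin

lemma dd_lt: "dd n c j < n"
proof -
  obtain m where m: "m < n" "\<not> c m" using cut by blast
  define k0 where "k0 = (m + n - j mod n) mod n"
  have "(j + k0) mod n = m"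
  proof -
    have "j mod n < n" using n2 by simp
    have "(j + k0) mod n = (j mod n + k0) mod n" by (simp add: mod_add_left_eq)
    also have "\<dots> = (j mod n + (m + n - j mod n)) mod n" unfolding k0_def by (simp add: mod_add_right_eq)
    also have "j mod n + (m + n - j mod n) = m + n" using \<open>j mod n < n\<close> by simp
    finally show ?thesis using m by simp
  qed
  hence "dd n c j \<le> k0" unfolding dd_def using m by (metis Least_le)
  moreover have "k0 < n" unfolding k0_def using n2 by simp
  ultimately show ?thesis by simp
qed

lemma dd_spec: "\<not> c (ee n c j)"
proof -
  obtain m where m: "m < n" "\<not> c m" using cut by blast
  have "\<exists>k. \<not> c ((j + k) mod n)"
  proof
    show "\<not> c ((j + (m + n - j mod n)) mod n)"
    proof -
      have "j mod n < n" using n2 by simp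
      have "(j + (m + n - j mod n)) mod n = (j mod n + (m + n - j mod n)) mod n" by (simp add: mod_add_left_eq)
      also have "j mod n + (m + n - j mod n) = m + n" using \<open>j mod n < n\<close> by simp
      finally show ?thesis using m by simp
    qed
  qed
  then show ?thesis unfolding ee_def dd_def by (rule LeastI_ex)
qed

lemma dd_before: "k < dd n c j \<Longrightarrow> c ((j + k) mod n)"
  unfolding dd_def using not_less_Least by blast

lemma ee_lt: "ee n c j < n" unfolding ee_def using n2 by simp

lemma step_notC: "j < n \<Longrightarrow> \<not> c j \<Longrightarrow> dd n c j = 0 \<and> ee n c j = j"
proof -
  assume "j < n" "\<not> c j"
  hence "\<not> c ((j + 0) mod n)" by simp
  hence "dd n c j = 0" unfolding dd_def by (metis (mono_tags, lifting) Least_eq_0)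
  thus ?thesis unfolding ee_def using \<open>j < n\<close> by simp
qed

lemma step_C: "j < n \<Longrightarrow> c j \<Longrightarrow> dd n c j = Suc (dd n c ((j+1) mod n)) \<and> ee n c j = ee n c ((j+1) mod n)"
proof -
  assume j: "j < n" "c j"
  have ex: "\<exists>k. \<not> c ((j + k) mod n)" using dd_spec[of j] unfolding ee_def by blast
  have "dd n c j = Suc (LEAST k. \<not> c ((j + Suc k) mod n))"
    unfolding dd_def
    apply (rule Least_Suc)
    using LeastI_ex[OF ex] apply simp
    using j by simp
  moreover have "\<And>k. (j + Suc k) mod n = ((j+1) mod n + k) mod n" by (simp add: mod_add_left_eq)
  ultimately have "dd n c j = Suc (dd n c ((j+1) mod n))" unfolding dd_def by simp
  moreover have "ee n c j = ee n c ((j+1) mod n)"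
    unfolding ee_def using calculation by (simp add: mod_add_left_eq)
  ultimately show ?thesis by simp
qed

lemma ee_ee: "ee n c (ee n c j) = ee n c j"
  using step_notC[OF ee_lt dd_spec] by simp

lemma mod_cancel_add: "(x + d) mod n = (y + d) mod n \<Longrightarrow> x mod n = y mod n"
proof -
  assume h: "(x + d) mod n = (y + d) mod n"
  have h': "(int x + int d) mod int n = (int y + int d) mod int n"
    using h by (metis of_nat_add of_nat_mod)
  have "int x mod int n = ((int x + int d) mod int n - int d) mod int n" by (simp add: mod_diff_left_eq)
  also have "\<dots> = ((int y + int d) mod int n - int d) mod int n" using h' by simp
  also have "\<dots> = int y mod int n" by (simp add: mod_diff_left_eq)
  finally show ?thesis by (metis of_nat_eq_iff of_nat_mod)
qed

lemma uniq: "j1 < n \<Longrightarrow> j2 < n \<Longrightarrow> ee n c j1 = ee n c j2 \<Longrightarrow> dd n c j1 = dd n c j2 \<Longrightarrow> j1 = j2"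
proof -
  assume a: "j1 < n" "j2 < n" "ee n c j1 = ee n c j2" "dd n c j1 = dd n c j2"
  have "(j1 + dd n c j1) mod n = (j2 + dd n c j1) mod n" using a(3,4) unfolding ee_def by simp
  hence "j1 mod n = j2 mod n" by (rule mod_cancel_add)
  thus ?thesis using a(1,2) by simp
qed

lemma along: "j < n \<Longrightarrow> k \<le> dd n c j \<Longrightarrow> ee n c ((j + k) mod n) = ee n c j \<and> dd n c ((j + k) mod n) = dd n c j - k"
proof (induction k)
  case 0 then show ?case by simp
next
  case (Suc k)
  let ?p = "(j + k) mod n"
  have ih: "ee n c ?p = ee n c j" "dd n c ?p = dd n c j - k" using Suc by auto
  have cp: "c ?p" using dd_before Suc by simp
  have pl: "?p < n" using n2 by simp
  have "((j + k) mod n + 1) mod n = (j + Suc k) mod n" by (simp add: mod_Suc_eq)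
  with step_C[OF pl cp] ih show ?case by auto
qed

lemma pos_in_arc: "j1 < n \<Longrightarrow> j2 < n \<Longrightarrow> ee n c j1 = ee n c j2 \<Longrightarrow> dd n c j2 \<le> dd n c j1 \<Longrightarrow>
   j2 = (j1 + (dd n c j1 - dd n c j2)) mod n"
proof -
  assume a: "j1 < n" "j2 < n" "ee n c j1 = ee n c j2" "dd n c j2 \<le> dd n c j1"
  let ?p = "(j1 + (dd n c j1 - dd n c j2)) mod n"
  have "ee n c ?p = ee n c j1" "dd n c ?p = dd n c j2" using along[OF a(1), of "dd n c j1 - dd n c j2"] a by auto
  moreover have "?p < n" using n2 by simp
  ultimately have "?p = j2" using uniq[of ?p j2] a(2,3) by simp
  thus ?thesis by simp
qed

lemma after_cut: "l < n \<Longrightarrow> \<not> c l \<Longrightarrow> j' < n \<Longrightarrow> ee n c j' = ee n c ((l+1) mod n) \<Longrightarrow> dd n c j' \<le> dd n c ((l+1) mod n)"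
proof (rule ccontr)
  assume a: "l < n" "\<not> c l" "j' < n" "ee n c j' = ee n c ((l+1) mod n)" "\<not> dd n c j' \<le> dd n c ((l+1) mod n)"
  let ?l' = "(l+1) mod n"
  define k where "k = dd n c j' - dd n c ?l'"
  have k1: "k \<ge> 1" "k \<le> dd n c j'" using a(5) unfolding k_def by auto
  have "?l' = (j' + k) mod n" unfolding k_def using pos_in_arc[OF a(3) _ a(4)] a(5) n2 by simp
  moreover have "c ((j' + (k - 1)) mod n)" using dd_before[of "k-1" j'] k1 by simp
  moreover have "(j' + k) mod n = ((j' + (k-1)) + 1) mod n" using k1 by simp
  ultimately have "((j' + (k-1)) + 1) mod n = (l + 1) mod n" by simp
  hence "(j' + (k-1)) mod n = l mod n" using mod_cancel_add by blast
  with a(1) \<open>c ((j' + (k - 1)) mod n)\<close> a(2) show False by simp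
qed

end

fun stp :: "nat \<Rightarrow> bool \<times> nat set \<Rightarrow> nat option" where
  "stp \<sigma> (b, s) = (if \<sigma> + card s \<le> 1 \<and> (b \<or> \<sigma> + card s = 1) then Some (if b then \<sigma> + card s else 0) else None)"

fun runs :: "nat \<Rightarrow> (bool \<times> nat set) list \<Rightarrow> nat option" where
  "runs \<sigma> [] = Some \<sigma>"
| "runs \<sigma> (x # xs) = (case stp \<sigma> x of None \<Rightarrow> None | Some \<sigma>' \<Rightarrow> runs \<sigma>' xs)"

definition Loc :: "nat \<Rightarrow> (bool \<times> nat set) set" where
  "Loc a = UNIV \<times> Pow {..<a}"

definition Ls :: "nat \<Rightarrow> nat \<Rightarrow> (bool \<times> nat set) list set" where
  "Ls n a = {xs. length xs = n \<and> set xs \<subseteq> Loc a}"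

definition Am :: "int \<Rightarrow> nat \<Rightarrow> nat \<Rightarrow> int" where
  "Am a i j = (if i = 0 then (if j = 0 then 1 + a else a) else 1)"

fun Mx :: "int \<Rightarrow> nat \<Rightarrow> nat \<Rightarrow> nat \<Rightarrow> int" where
  "Mx a 0 i j = (if i = j then 1 else 0)"
| "Mx a (Suc n) i j = Am a i 0 * Mx a n 0 j + Am a i 1 * Mx a n 1 j"

lemma finite_Loc: "finite (Loc a)" unfolding Loc_def by simp

lemma finite_Ls: "finite (Ls n a)"
  unfolding Ls_def using finite_lists_length_eq[OF finite_Loc, of a n] by (simp add: conj_commute)

lemma Loc_fin: "(b, s) \<in> Loc a \<Longrightarrow> finite s"
  unfolding Loc_def by (auto intro: finite_subset)

lemma stp_le: "stp i x = Some r \<Longrightarrow> r \<le> 1"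
  by (cases x) (auto split: if_splits)

lemma card_single: "card ((\<lambda>k. (b, {k})) ` {..<a}) = a"
  by (subst card_image) (auto simp: inj_on_def)

lemma single_set: "{x \<in> Loc a. fst x = b \<and> card (snd x) = 1} = (\<lambda>k. (b, {k})) ` {..<a}"
  unfolding Loc_def by (auto simp: card_1_singleton_iff)

lemma loc_count: "i \<le> 1 \<Longrightarrow> j \<le> 1 \<Longrightarrow> int (card {x \<in> Loc a. stp i x = Some j}) = Am (int a) i j"
proof -
  assume ij: "i \<le> 1" "j \<le> 1"
  have z: "(True, {}) \<in> Loc a" "(False, {}) \<in> Loc a" unfolding Loc_def by auto
  consider "i = 0" "j = 0" | "i = 0" "j = 1" | "i = 1" "j = 0" | "i = 1" "j = 1" using ij by linarith
  then show ?thesis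
  proof cases
    case 1
    have "{x \<in> Loc a. stp i x = Some j} = insert (True, {}) {x \<in> Loc a. fst x = False \<and> card (snd x) = 1}"
      using 1 z by (auto split: if_splits dest: Loc_fin)
    moreover have "(True, {}) \<notin> {x \<in> Loc a. fst x = False \<and> card (snd x) = 1}" by simp
    ultimately show ?thesis using 1 unfolding single_set Am_def by (simp add: card_single)
  next
    case 2
    have "{x \<in> Loc a. stp i x = Some j} = {x \<in> Loc a. fst x = True \<and> card (snd x) = 1}"
      using 2 by (auto split: if_splits)
    then show ?thesis using 2 unfolding single_set Am_def by (simp add: card_single)
  next
    case 3
    have "{x \<in> Loc a. stp i x = Some j} = {(False, {})}"
      using 3 z unfolding Loc_def by (auto split: if_splits simp: finite_subset[of _ "{..<a}"])
    then show ?thesis using 3 unfolding Am_def by simp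
  next
    case 4
    have "{x \<in> Loc a. stp i x = Some j} = {(True, {})}"
      using 4 z unfolding Loc_def by (auto split: if_splits simp: finite_subset[of _ "{..<a}"])
    then show ?thesis using 4 unfolding Am_def by simp
  qed
qed

lemma runs_count: "i \<le> 1 \<Longrightarrow> j \<le> 1 \<Longrightarrow> int (card {xs \<in> Ls n a. runs i xs = Some j}) = Mx (int a) n i j"
proof (induction n arbitrary: i)
  case 0
  have "{xs \<in> Ls 0 a. runs i xs = Some j} = (if i = j then {[]} else {})" unfolding Ls_def by auto
  then show ?case by simp
next
  case (Suc n)
  define B where "B = (\<lambda>s. {x \<in> Loc a. stp i x = Some s} \<times> {xs \<in> Ls n a. runs s xs = Some j})"
  let ?f = "\<lambda>(x, xs). x # xs"
  have eq: "{xs \<in> Ls (Suc n) a. runs i xs = Some j} = ?f ` B 0 \<union> ?f ` B 1"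
  proof (rule set_eqI, rule iffI)
    fix ys assume "ys \<in> {xs \<in> Ls (Suc n) a. runs i xs = Some j}"
    then obtain x xs where ys: "ys = x # xs" "length xs = n" "x \<in> Loc a" "set xs \<subseteq> Loc a" "runs i (x # xs) = Some j"
      unfolding Ls_def by (cases ys) auto
    then obtain s where s: "stp i x = Some s" "runs s xs = Some j" by (auto split: option.splits)
    have "s \<le> 1" using stp_le s by blast
    hence "s = 0 \<or> s = 1" by linarith
    moreover have "(x, xs) \<in> B s" unfolding B_def Ls_def using ys s by auto
    ultimately show "ys \<in> ?f ` B 0 \<union> ?f ` B 1" using ys by force
  next
    fix ys assume "ys \<in> ?f ` B 0 \<union> ?f ` B 1"
    then show "ys \<in> {xs \<in> Ls (Suc n) a. runs i xs = Some j}"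
      unfolding B_def Ls_def by auto
  qed
  have inj: "inj_on ?f X" for X by (auto simp: inj_on_def)
  have fin: "finite (B s)" for s unfolding B_def using finite_Loc finite_Ls by simp
  have disj: "?f ` B 0 \<inter> ?f ` B 1 = {}" unfolding B_def by auto
  have "card {xs \<in> Ls (Suc n) a. runs i xs = Some j} = card (B 0) + card (B 1)"
  proof -
    have "card (?f ` B 0 \<union> ?f ` B 1) = card (?f ` B 0) + card (?f ` B 1)"
      using fin disj by (intro card_Un_disjoint) auto
    then show ?thesis unfolding eq using card_image[OF inj, of "B 0"] card_image[OF inj, of "B 1"] by linarith
  qed
  moreover have "card (B s) = card {x \<in> Loc a. stp i x = Some s} * card {xs \<in> Ls n a. runs s xs = Some j}" for s
    unfolding B_def by (simp add: card_cartesian_product)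
  ultimately have "int (card {xs \<in> Ls (Suc n) a. runs i xs = Some j}) =
      int (card {x \<in> Loc a. stp i x = Some 0}) * int (card {xs \<in> Ls n a. runs 0 xs = Some j})
    + int (card {x \<in> Loc a. stp i x = Some 1}) * int (card {xs \<in> Ls n a. runs 1 xs = Some j})" by simp
  then show ?case using Suc loc_count by simp
qed

lemma runs_le: "runs i xs = Some j \<Longrightarrow> xs \<noteq> [] \<Longrightarrow> j \<le> 1"
proof (induction xs arbitrary: i)
  case Nil then show ?case by simp
next
  case (Cons x xs)
  then obtain s where s: "stp i x = Some s" "runs s xs = Some j" by (auto split: option.splits)
  show ?case
  proof (cases xs)
    case Nil then show ?thesis using s stp_le by auto
  next
    case (Cons y ys) then show ?thesis using Cons.IH s by auto
  qed
qed

lemma runs_uniq: "\<exists>x\<in>set xs. \<not> fst x \<Longrightarrow> runs i xs = Some i' \<Longrightarrow> runs j xs = Some j' \<Longrightarrow> i' = j'"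
proof (induction xs arbitrary: i j)
  case Nil then show ?case by simp
next
  case (Cons x xs)
  obtain s where s: "stp i x = Some s" "runs s xs = Some i'" using Cons.prems by (auto split: option.splits)
  obtain t where t: "stp j x = Some t" "runs t xs = Some j'" using Cons.prems by (auto split: option.splits)
  show ?case
  proof (cases "fst x")
    case False
    then have "s = 0" "t = 0" using s t by (cases x; auto split: if_splits)+
    then show ?thesis using s t by simp
  next
    case True
    then have "\<exists>x\<in>set xs. \<not> fst x" using Cons.prems by auto
    then show ?thesis using Cons.IH s t by blast
  qed
qed

lemma runs_nocut: "\<forall>x\<in>set xs. fst x \<Longrightarrow> runs i xs = Some j \<Longrightarrow> j = i + (\<Sum>x\<leftarrow>xs. card (snd x))"
proof (induction xs arbitrary: i)
  case Nil then show ?case by simp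
next
  case (Cons x xs)
  obtain s where s: "stp i x = Some s" "runs s xs = Some j" using Cons.prems by (auto split: option.splits)
  have "s = i + card (snd x)" using s Cons.prems by (cases x; auto split: if_splits)
  then show ?case using Cons.IH[OF _ s(2)] Cons.prems by simp
qed

lemma runs_rep: "i \<le> 1 \<Longrightarrow> runs i (replicate m (True, {})) = Some i"
  by (induction m) auto

lemma nocut_rep: "set xs \<subseteq> Loc a \<Longrightarrow> \<forall>x\<in>set xs. fst x \<Longrightarrow> runs i xs = Some i \<Longrightarrow> xs = replicate (length xs) (True, {})"
proof -
  assume a: "set xs \<subseteq> Loc a" "\<forall>x\<in>set xs. fst x" "runs i xs = Some i"
  have "(\<Sum>x\<leftarrow>xs. card (snd x)) = 0" using runs_nocut[OF a(2) a(3)] by simp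
  hence "\<forall>x\<in>set xs. card (snd x) = 0" by simp
  moreover have "\<forall>x\<in>set xs. finite (snd x)" using a(1) Loc_fin by (metis prod.collapse subset_iff)
  ultimately have "\<forall>x\<in>set xs. x = (True, {})" using a(2) by (metis card_0_eq prod.collapse)
  thus ?thesis by (simp add: replicate_length_same)
qed

definition Gd :: "nat \<Rightarrow> nat \<Rightarrow> (bool \<times> nat set) list set" where
  "Gd n a = {xs \<in> Ls n a. (\<exists>x\<in>set xs. \<not> fst x) \<and> (\<exists>i. runs i xs = Some i)}"

lemma Gd_count: "int (card (Gd n a)) = Mx (int a) n 0 0 + Mx (int a) n 1 1 - 2"
proof -
  define Z where "Z = (\<lambda>i. {xs \<in> Ls n a. runs i xs = Some i})"
  define R where "R = replicate n (True, {} :: nat set)"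
  have RL: "R \<in> Ls n a" unfolding R_def Ls_def Loc_def by auto
  have RG: "R \<notin> Gd n a" unfolding R_def Gd_def by auto
  have Zs: "Z i = (Gd n a \<inter> Z i) \<union> {R}" if "i \<le> 1" for i
  proof
    show "Z i \<subseteq> Gd n a \<inter> Z i \<union> {R}"
    proof
      fix xs assume xs: "xs \<in> Z i"
      show "xs \<in> Gd n a \<inter> Z i \<union> {R}"
      proof (cases "\<exists>x\<in>set xs. \<not> fst x")
        case True then show ?thesis using xs unfolding Z_def Gd_def by auto
      next
        case False
        then have "xs = R" using nocut_rep[of xs a i] xs unfolding Z_def Ls_def R_def by auto
        then show ?thesis by simp
      qed
    qed
  next
    show "Gd n a \<inter> Z i \<union> {R} \<subseteq> Z i" using RL runs_rep[OF that] unfolding Z_def R_def by auto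
  qed
  have finZ: "finite (Z i)" for i unfolding Z_def using finite_Ls by simp
  have c: "card (Z i) = card (Gd n a \<inter> Z i) + 1" if "i \<le> 1" for i
  proof -
    have "card (Z i) = card ((Gd n a \<inter> Z i) \<union> {R})" using Zs[OF that] by simp
    also have "\<dots> = card (Gd n a \<inter> Z i) + 1"
      using RG finite_subset[OF _ finZ[of i]] by (simp add: card_Un_disjoint)
    finally show ?thesis .
  qed
  have G: "Gd n a = (Gd n a \<inter> Z 0) \<union> (Gd n a \<inter> Z 1)"
  proof
    show "Gd n a \<subseteq> Gd n a \<inter> Z 0 \<union> Gd n a \<inter> Z 1"
    proof
      fix xs assume xs: "xs \<in> Gd n a"
      then obtain i where i: "runs i xs = Some i" unfolding Gd_def by auto
      have "xs \<noteq> []" using xs unfolding Gd_def by auto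
      hence "i \<le> 1" using runs_le i by blast
      hence "i = 0 \<or> i = 1" by linarith
      then show "xs \<in> Gd n a \<inter> Z 0 \<union> Gd n a \<inter> Z 1" using xs i unfolding Z_def Gd_def by auto
    qed
  qed auto
  have D: "(Gd n a \<inter> Z 0) \<inter> (Gd n a \<inter> Z 1) = {}"
    unfolding Gd_def Z_def using runs_uniq by fastforce
  have "card (Gd n a) = card (Gd n a \<inter> Z 0) + card (Gd n a \<inter> Z 1)"
    using G D finite_subset[OF _ finZ] by (metis Int_lower2 card_Un_disjoint)
  hence "int (card (Gd n a)) + 2 = int (card (Z 0)) + int (card (Z 1))" using c by simp
  moreover have "int (card (Z 0)) = Mx (int a) n 0 0" "int (card (Z 1)) = Mx (int a) n 1 1"
    unfolding Z_def using runs_count by auto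
  ultimately show ?thesis by simp
qed

lemma Mx_rec: "i \<le> 1 \<Longrightarrow> Mx a (Suc (Suc n)) i j = (a + 2) * Mx a (Suc n) i j - Mx a n i j"
proof -
  assume "i \<le> 1"
  hence "i = 0 \<or> i = 1" by linarith
  moreover have "Mx a (Suc (Suc n)) 0 j = (a + 2) * Mx a (Suc n) 0 j - Mx a n 0 j"
    by (simp add: Am_def algebra_simps)
  moreover have "Mx a (Suc (Suc n)) 1 j = (a + 2) * Mx a (Suc n) 1 j - Mx a n 1 j"
    by (simp add: Am_def algebra_simps)
  ultimately show ?thesis by auto
qed

definition tr :: "int \<Rightarrow> nat \<Rightarrow> int" where "tr a n = Mx a n 0 0 + Mx a n 1 1"

lemma tr_rec: "tr a (Suc (Suc n)) = (a + 2) * tr a (Suc n) - tr a n"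
  unfolding tr_def using Mx_rec[where i=0 and j=0 and a=a and n=n] Mx_rec[where i=1 and j=1 and a=a and n=n]
  by (simp add: algebra_simps)

lemma tr_W: "tr a (Suc n) - 2 = a * Wpoly n a"
proof (induction n rule: nat_less_induct)
  case (1 n)
  show ?case
  proof (cases n)
    case 0 then show ?thesis by (simp add: tr_def Am_def)
  next
    case (Suc m)
    show ?thesis
    proof (cases m)
      case 0 then show ?thesis using Suc by (simp add: tr_def Am_def algebra_simps)
    next
      case (Suc k)
      have h1: "tr a (Suc (Suc k)) - 2 = a * Wpoly (Suc k) a" using 1 \<open>n = Suc m\<close> Suc by auto
      have h2: "tr a (Suc k) - 2 = a * Wpoly k a" using 1 \<open>n = Suc m\<close> Suc by auto
      have "tr a (Suc n) = (a + 2) * tr a (Suc (Suc k)) - tr a (Suc k)"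
        using \<open>n = Suc m\<close> Suc tr_rec by simp
      then show ?thesis using h1 h2 \<open>n = Suc m\<close> Suc by (simp add: algebra_simps)
    qed
  qed
qed

lemma tr_lucas: "tr 1 n = lucas (2 * n)"
proof (induction n rule: nat_less_induct)
  case (1 n)
  show ?case
  proof (cases n)
    case 0 then show ?thesis by (simp add: tr_def)
  next
    case (Suc m)
    show ?thesis
    proof (cases m)
      case 0 then show ?thesis using Suc by (simp add: tr_def Am_def numeral_eq_Suc)
    next
      case (Suc k)
      have h1: "tr 1 (Suc k) = lucas (2 * Suc k)" using 1 \<open>n = Suc m\<close> Suc by auto
      have h2: "tr 1 k = lucas (2 * k)" using 1 \<open>n = Suc m\<close> Suc by auto
      have "tr 1 n = 3 * tr 1 (Suc k) - tr 1 k"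
        using \<open>n = Suc m\<close> Suc tr_rec[of 1 k] by simp
      moreover have L: "lucas (Suc (Suc (Suc (Suc q)))) = 3 * lucas (Suc (Suc q)) - lucas q" for q
        by simp
      moreover have "2 * n = Suc (Suc (Suc (Suc (2 * k))))" "2 * Suc k = Suc (Suc (2 * k))"
        using \<open>n = Suc m\<close> Suc by auto
      ultimately show ?thesis using h1 h2 by (metis)
    qed
  qed
qed

definition AC :: "nat \<Rightarrow> (nat \<Rightarrow> bool) \<Rightarrow> (nat \<Rightarrow> nat set) \<Rightarrow> bool" where
  "AC n c s \<longleftrightarrow> (\<exists>m<n. \<not> c m) \<and>
     (\<forall>j<n. (\<Sum>j'\<in>{j'. j' < n \<and> ee n c j' = ee n c j}. card (s j')) = 1)"

lemma runs_append: "runs i (xs @ ys) = (case runs i xs of None \<Rightarrow> None | Some j \<Rightarrow> runs j ys)"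
  by (induction xs arbitrary: i) (auto split: option.splits)

lemma runs_seq: "(\<forall>l<n. stp (\<sigma> l) (f l) = Some (\<sigma> (Suc l))) \<Longrightarrow> runs (\<sigma> 0) (map f [0..<n]) = Some (\<sigma> n)"
  by (induction n) (auto simp: runs_append)

lemma runs_prefix: "runs i (map f [0..<n]) = Some i' \<Longrightarrow> l \<le> n \<Longrightarrow> \<exists>t. runs i (map f [0..<l]) = Some t"
proof -
  assume a: "runs i (map f [0..<n]) = Some i'" "l \<le> n"
  have "[0..<n] = [0..<l] @ [l..<n]" using a(2) by (metis le0 upt_add_eq_append le_add_diff_inverse)
  hence "runs i (map f [0..<l] @ map f [l..<n]) = Some i'" using a(1) by simp
  thus ?thesis by (auto simp: runs_append split: option.splits)
qed

lemma runs_states: "runs i (map f [0..<n]) = Some i' \<Longrightarrow>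
  \<exists>\<sigma>. \<sigma> 0 = i \<and> \<sigma> n = i' \<and> (\<forall>l<n. stp (\<sigma> l) (f l) = Some (\<sigma> (Suc l)))"
proof -
  assume a: "runs i (map f [0..<n]) = Some i'"
  define \<sigma> where "\<sigma> l = the (runs i (map f [0..<l]))" for l
  have s: "l \<le> n \<Longrightarrow> runs i (map f [0..<l]) = Some (\<sigma> l)" for l
    using runs_prefix[OF a] unfolding \<sigma>_def by fastforce
  have "\<forall>l<n. stp (\<sigma> l) (f l) = Some (\<sigma> (Suc l))"
  proof (intro allI impI)
    fix l assume "l < n"
    have "runs i (map f [0..<Suc l]) = Some (\<sigma> (Suc l))" using s[of "Suc l"] \<open>l < n\<close> by (metis Suc_leI)
    moreover have "runs i (map f [0..<Suc l]) = runs (\<sigma> l) [f l]"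
      using s[of l] \<open>l < n\<close> by (simp add: runs_append del: upt_Suc) (simp add: runs_append)
    moreover have "runs (\<sigma> l) [f l] = (case stp (\<sigma> l) (f l) of None \<Rightarrow> None | Some t \<Rightarrow> Some t)"
      by (simp split: option.splits)
    ultimately show "stp (\<sigma> l) (f l) = Some (\<sigma> (Suc l))" by (auto split: option.splits)
  qed
  moreover have "\<sigma> 0 = i" unfolding \<sigma>_def by simp
  moreover have "\<sigma> n = i'" using s[of n] a by simp
  ultimately show ?thesis by blast
qed

context
  fixes n :: nat and c :: "nat \<Rightarrow> bool" and s :: "nat \<Rightarrow> nat set"
  assumes n2: "2 \<le> n" and cut: "\<exists>m<n. \<not> c m" and fin: "\<And>j. finite (s j)"
begin

definition arc :: "nat \<Rightarrow> nat set" where "arc l = {j'. j' < n \<and> ee n c j' = ee n c l}"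
definition FF :: "nat \<Rightarrow> nat" where "FF l = (\<Sum>j'\<in>{j' \<in> arc l. dd n c j' > dd n c l}. card (s j'))"

lemma fin_arc: "finite (arc l)" unfolding arc_def by simp

lemma S1: "l < n \<Longrightarrow> FF l + card (s l) = (\<Sum>j'\<in>{j' \<in> arc l. dd n c j' \<ge> dd n c l}. card (s j'))"
proof -
  assume l: "l < n"
  have "{j' \<in> arc l. dd n c j' \<ge> dd n c l} = insert l {j' \<in> arc l. dd n c j' > dd n c l}"
    using l uniq[OF n2 cut] unfolding arc_def by force
  moreover have "finite {j' \<in> arc l. dd n c j' > dd n c l}" using fin_arc by simp
  ultimately show ?thesis unfolding FF_def by simp
qed

lemma S_all: "l < n \<Longrightarrow> dd n c l = 0 \<Longrightarrow> FF l + card (s l) = (\<Sum>j'\<in>arc l. card (s j'))"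
  using S1 by simp

lemma F_succ_C: "l < n \<Longrightarrow> c l \<Longrightarrow> FF ((l+1) mod n) = FF l + card (s l)"
proof -
  assume l: "l < n" "c l"
  have st: "dd n c l = Suc (dd n c ((l+1) mod n))" "ee n c l = ee n c ((l+1) mod n)"
    using step_C[OF n2 cut l] by auto
  have "arc ((l+1) mod n) = arc l" unfolding arc_def using st by simp
  moreover have "{j' \<in> arc l. dd n c j' > dd n c ((l+1) mod n)} = {j' \<in> arc l. dd n c j' \<ge> dd n c l}"
    using st by auto
  ultimately show ?thesis using S1[OF l(1)] unfolding FF_def by simp
qed

lemma F_succ_notC: "l < n \<Longrightarrow> \<not> c l \<Longrightarrow> FF ((l+1) mod n) = 0"
proof -
  assume l: "l < n" "\<not> c l"
  have "{j' \<in> arc ((l+1) mod n). dd n c j' > dd n c ((l+1) mod n)} = {}"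
    using after_cut[OF n2 cut l] unfolding arc_def by force
  thus ?thesis unfolding FF_def by (metis sum.empty)
qed

lemma AC_imp_runs: "AC n c s \<Longrightarrow> \<exists>i. runs i (map (\<lambda>j. (c j, s j)) [0..<n]) = Some i"
proof -
  assume ac: "AC n c s"
  define \<sigma> where "\<sigma> l = FF (l mod n)" for l
  have "\<forall>l<n. stp (\<sigma> l) (c l, s l) = Some (\<sigma> (Suc l))"
  proof (intro allI impI)
    fix l assume l: "l < n"
    have sl: "\<sigma> l = FF l" "\<sigma> (Suc l) = FF ((l+1) mod n)" unfolding \<sigma>_def using l by simp_all
    have arcl: "l \<in> arc l" unfolding arc_def using l by simp
    have one: "(\<Sum>j'\<in>arc l. card (s j')) = 1" using ac l unfolding AC_def arc_def by auto
    have le: "FF l + card (s l) \<le> 1"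
    proof -
      have "FF l + card (s l) = (\<Sum>j'\<in>{j' \<in> arc l. dd n c j' \<ge> dd n c l}. card (s j'))" using S1 l by simp
      also have "\<dots> \<le> (\<Sum>j'\<in>arc l. card (s j'))" by (rule sum_mono2[OF fin_arc]) auto
      finally show ?thesis using one by simp
    qed
    show "stp (\<sigma> l) (c l, s l) = Some (\<sigma> (Suc l))"
    proof (cases "c l")
      case True
      then show ?thesis using sl le F_succ_C[OF l True] by simp
    next
      case False
      have "dd n c l = 0" using step_notC[OF n2 cut l False] by simp
      hence "FF l + card (s l) = 1" using S_all[OF l] one by simp
      then show ?thesis using sl F_succ_notC[OF l False] False by simp
    qed
  qed
  hence "runs (\<sigma> 0) (map (\<lambda>j. (c j, s j)) [0..<n]) = Some (\<sigma> n)" by (rule runs_seq)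
  moreover have "\<sigma> n = \<sigma> 0" unfolding \<sigma>_def by simp
  ultimately show ?thesis by metis
qed

lemma runs_imp_AC: "runs i (map (\<lambda>j. (c j, s j)) [0..<n]) = Some i \<Longrightarrow> AC n c s"
proof -
  assume r: "runs i (map (\<lambda>j. (c j, s j)) [0..<n]) = Some i"
  obtain \<sigma> where sg: "\<sigma> 0 = i" "\<sigma> n = i" "\<forall>l<n. stp (\<sigma> l) (c l, s l) = Some (\<sigma> (Suc l))"
    using runs_states[OF r] by auto
  have sgm: "\<sigma> (Suc l) = \<sigma> ((l+1) mod n)" if "l < n" for l
  proof (cases "Suc l = n")
    case True then show ?thesis using sg by simp
  next
    case False then show ?thesis using that by simp
  qed
  have inv: "\<forall>l. l < n \<longrightarrow> \<sigma> l = FF l"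
  proof -
    have "\<forall>l. n - dd n c l = k \<longrightarrow> l < n \<longrightarrow> \<sigma> l = FF l" for k
    proof (induction k rule: less_induct)
      case (less k)
      show ?case
      proof (intro allI impI)
        fix l assume kl: "n - dd n c l = k" and l: "l < n"
        define p where "p = (l + n - 1) mod n"
        have p: "p < n" unfolding p_def using n2 by simp
        have pl: "(p + 1) mod n = l"
        proof -
          have "(p + 1) mod n = ((l + n - 1) + 1) mod n" unfolding p_def by (simp add: mod_Suc_eq)
          also have "(l + n - 1) + 1 = l + n" using n2 by simp
          finally show ?thesis using l by simp
        qed
        have stp_p: "stp (\<sigma> p) (c p, s p) = Some (\<sigma> l)" using sg(3) p sgm[OF p] pl by simp
        show "\<sigma> l = FF l"
        proof (cases "c p")
          case True
          have st: "dd n c p = Suc (dd n c l)" using step_C[OF n2 cut p True] pl by simp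
          have "n - dd n c p < k" using kl st dd_lt[OF n2 cut, of p] by simp
          hence ih: "\<sigma> p = FF p" using less p by blast
          have "\<sigma> l = \<sigma> p + card (s p)" using stp_p True by (auto split: if_splits)
          also have "\<dots> = FF l" using F_succ_C[OF p True] pl ih by simp
          finally show ?thesis .
        next
          case False
          have "\<sigma> l = 0" using stp_p False by (auto split: if_splits)
          also have "0 = FF l" using F_succ_notC[OF p False] pl by simp
          finally show ?thesis .
        qed
      qed
    qed
    thus ?thesis by blast
  qed
  show "AC n c s" unfolding AC_def
  proof (intro conjI allI impI)
    show "\<exists>m<n. \<not> c m" using cut .
    fix j assume j: "j < n"
    define m where "m = ee n c j"
    have m: "m < n" "\<not> c m" unfolding m_def using ee_lt[OF n2 cut] dd_spec[OF n2 cut] by auto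
    have dm: "dd n c m = 0" using step_notC[OF n2 cut m] by simp
    have "stp (\<sigma> m) (c m, s m) = Some (\<sigma> (Suc m))" using sg(3) m(1) by blast
    hence "\<sigma> m + card (s m) = 1" using m by (auto split: if_splits)
    hence "(\<Sum>j'\<in>arc m. card (s j')) = 1" using S_all[OF m(1) dm] inv m by simp
    moreover have "arc m = {j'. j' < n \<and> ee n c j' = ee n c j}"
      unfolding arc_def m_def using ee_ee[OF n2 cut] by simp
    ultimately show "(\<Sum>j'\<in>{j'. j' < n \<and> ee n c j' = ee n c j}. card (s j')) = 1" by simp
  qed
qed

end

lemma adj_sym: "(u, v) \<in> (adj_rel ends F)\<^sup>* \<Longrightarrow> (v, u) \<in> (adj_rel ends F)\<^sup>*"
proof -
  assume h: "(u, v) \<in> (adj_rel ends F)\<^sup>*"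
  have "sym (adj_rel ends F)" unfolding adj_rel_def sym_def by (auto simp: insert_commute)
  hence "sym ((adj_rel ends F)\<^sup>*)" by (rule sym_rtrancl)
  thus ?thesis using h by (auto dest: symD)
qed

lemma adj_edge: "x \<in> F \<Longrightarrow> ends x = {u, v} \<Longrightarrow> (u, v) \<in> (adj_rel ends F)\<^sup>*"
  unfolding adj_rel_def by blast

lemma adj_mono: "F \<subseteq> F' \<Longrightarrow> (u, v) \<in> (adj_rel ends F)\<^sup>* \<Longrightarrow> (u, v) \<in> (adj_rel ends F')\<^sup>*"
proof -
  assume "F \<subseteq> F'" "(u, v) \<in> (adj_rel ends F)\<^sup>*"
  moreover have "adj_rel ends F \<subseteq> adj_rel ends F'" using \<open>F \<subseteq> F'\<close> unfolding adj_rel_def by blast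
  ultimately show ?thesis using rtrancl_mono by blast
qed

lemma closed_set: "(\<forall>x\<in>F. \<forall>u v. ends x = {u, v} \<longrightarrow> u \<in> X \<longrightarrow> v \<in> X) \<Longrightarrow>
  (u, v) \<in> (adj_rel ends F)\<^sup>* \<Longrightarrow> u \<in> X \<Longrightarrow> v \<in> X"
proof -
  assume cl: "\<forall>x\<in>F. \<forall>u v. ends x = {u, v} \<longrightarrow> u \<in> X \<longrightarrow> v \<in> X"
  assume "(u, v) \<in> (adj_rel ends F)\<^sup>*" "u \<in> X"
  then show "v \<in> X"
  proof (induction rule: rtrancl_induct)
    case base then show ?case .
  next
    case (step y z)
    then show ?case using cl unfolding adj_rel_def by blast
  qed
qed

lemma closed_wheel:
  assumes "\<forall>l. Inl l \<in> F \<longrightarrow> (l \<in> A \<longleftrightarrow> (l+1) mod n \<in> A)"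
    and "\<forall>l k. Inr (l, k) \<in> F \<longrightarrow> l \<notin> A"
    and "(u, v) \<in> (adj_rel (mwheel_ends n) F)\<^sup>*" and "u \<in> Some ` A"
  shows "v \<in> Some ` A"
proof (rule closed_set[OF _ assms(3,4)])
  show "\<forall>x\<in>F. \<forall>u v. mwheel_ends n x = {u, v} \<longrightarrow> u \<in> Some ` A \<longrightarrow> v \<in> Some ` A"
  proof (intro ballI allI impI)
    fix x u v assume x: "x \<in> F" and e: "mwheel_ends n x = {u, v}" and u: "u \<in> Some ` A"
    show "v \<in> Some ` A"
    proof (cases x)
      case (Inl l)
      then have "{Some l, Some ((l + 1) mod n)} = {u, v}" using e by simp
      then have "(u = Some l \<and> v = Some ((l + 1) mod n)) \<or> (u = Some ((l + 1) mod n) \<and> v = Some l)"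
        by (auto simp: doubleton_eq_iff)
      then show ?thesis using assms(1) x Inl u by auto
    next
      case (Inr p)
      then obtain l k where p: "x = Inr (l, k)" by (cases p) auto
      then have "{None, Some l} = {u, v}" using e by simp
      then have "u = Some l \<or> u = None" by (auto simp: doubleton_eq_iff)
      then show ?thesis using assms(2) x p u by auto
    qed
  qed
qed

lemma separated:
  assumes "\<forall>l. Inl l \<in> F \<longrightarrow> (l \<in> A \<longleftrightarrow> (l+1) mod n \<in> A)"
    and "\<forall>l k. Inr (l, k) \<in> F \<longrightarrow> l \<notin> A"
    and "p \<in> Some ` A" "q \<notin> Some ` A" "{p, q} = {u, v}"
  shows "(u, v) \<notin> (adj_rel (mwheel_ends n) F)\<^sup>*"
proof
  assume uv: "(u, v) \<in> (adj_rel (mwheel_ends n) F)\<^sup>*"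
  have "(u = p \<and> v = q) \<or> (u = q \<and> v = p)" using assms(5) by (auto simp: doubleton_eq_iff)
  then show False
  proof
    assume "u = p \<and> v = q"
    then show False using closed_wheel[OF assms(1,2) uv] assms(3,4) by auto
  next
    assume "u = q \<and> v = p"
    then show False using closed_wheel[OF assms(1,2) adj_sym[OF uv]] assms(3,4) by auto
  qed
qed

lemma rim_path: "(\<forall>i<K. Inl ((j + i) mod n) \<in> F) \<Longrightarrow> j < n \<Longrightarrow>
   (Some j, Some ((j + K) mod n)) \<in> (adj_rel (mwheel_ends n) F)\<^sup>*"
proof (induction K)
  case 0 then show ?case by simp
next
  case (Suc K)
  have ih: "(Some j, Some ((j + K) mod n)) \<in> (adj_rel (mwheel_ends n) F)\<^sup>*" using Suc by auto
  have "Inl ((j + K) mod n) \<in> F" using Suc.prems by auto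
  moreover have "mwheel_ends n (Inl ((j + K) mod n)) = {Some ((j + K) mod n), Some ((j + Suc K) mod n)}"
    by (simp add: mod_Suc_eq)
  ultimately have "(Some ((j + K) mod n), Some ((j + Suc K) mod n)) \<in> (adj_rel (mwheel_ends n) F)\<^sup>*"
    by (rule adj_edge)
  with ih show ?case by (rule rtrancl_trans)
qed

lemma sum_ge2: "finite A \<Longrightarrow> (\<Sum>x\<in>A. f x) \<ge> (2::nat) \<Longrightarrow>
   (\<exists>x\<in>A. f x \<ge> 2) \<or> (\<exists>x\<in>A. \<exists>y\<in>A. x \<noteq> y \<and> f x \<ge> 1 \<and> f y \<ge> 1)"
proof -
  assume fin: "finite A" and s: "(\<Sum>x\<in>A. f x) \<ge> 2"
  obtain x where x: "x \<in> A" "f x \<ge> 1"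
    using s by (metis One_nat_def Suc_leI not_gr0 not_numeral_le_zero sum.neutral)
  show ?thesis
  proof (cases "f x \<ge> 2")
    case True then show ?thesis using x by blast
  next
    case False
    have "(\<Sum>x\<in>A. f x) = f x + (\<Sum>y\<in>A - {x}. f y)" using fin x by (simp add: sum.remove)
    hence "(\<Sum>y\<in>A - {x}. f y) \<ge> 1" using False s by linarith
    then obtain y where "y \<in> A - {x}" "f y \<ge> 1"
      by (metis One_nat_def Suc_leI not_gr0 not_one_le_zero sum.neutral)
    then show ?thesis using x by blast
  qed
qed

lemma sum_one_uniq: "finite A \<Longrightarrow> (\<Sum>x\<in>A. card (s x)) = (1::nat) \<Longrightarrow> (\<And>x. finite (s x)) \<Longrightarrow>
  x \<in> A \<Longrightarrow> y \<in> A \<Longrightarrow> k1 \<in> s x \<Longrightarrow> k2 \<in> s y \<Longrightarrow> x = y \<and> k1 = k2"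
proof (rule ccontr)
  assume fin: "finite A" and s1: "(\<Sum>x\<in>A. card (s x)) = 1" and fs: "\<And>x. finite (s x)"
    and xy: "x \<in> A" "y \<in> A" "k1 \<in> s x" "k2 \<in> s y" and ne: "\<not> (x = y \<and> k1 = k2)"
  show False
  proof (cases "x = y")
    case True
    then have "k1 \<noteq> k2" using ne by simp
    then have "card {k1, k2} \<le> card (s x)" using xy True fs by (intro card_mono) auto
    then have "card (s x) \<ge> 2" using \<open>k1 \<noteq> k2\<close> by simp
    moreover have "card (s x) \<le> (\<Sum>x\<in>A. card (s x))" using fin xy by (intro member_le_sum) auto
    ultimately show False using s1 by simp
  next
    case False
    have "card (s x) \<ge> 1" "card (s y) \<ge> 1" using xy fs by (auto simp: Suc_le_eq card_gt_0_iff)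
    moreover have "(\<Sum>z\<in>{x, y}. card (s z)) \<le> (\<Sum>z\<in>A. card (s z))"
      using fin xy by (intro sum_mono2) auto
    ultimately show False using s1 False by simp
  qed
qed

lemma arc_conn:
  assumes n2: "2 \<le> n" and cut: "\<exists>m<n. \<not> c m"
    and F: "\<forall>i<n. c i \<longrightarrow> Inl i \<in> F"
    and j: "j1 < n" "j2 < n" "ee n c j1 = ee n c j2"
  shows "(Some j1, Some j2) \<in> (adj_rel (mwheel_ends n) F)\<^sup>*"
proof -
  have to_e: "(Some j, Some (ee n c j)) \<in> (adj_rel (mwheel_ends n) F)\<^sup>*" if "j < n" for j
  proof -
    have "\<forall>i<dd n c j. Inl ((j + i) mod n) \<in> F"
      using dd_before[OF n2 cut] F n2 by simp
    thus ?thesis unfolding ee_def using rim_path that by blast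
  qed
  show ?thesis using to_e[OF j(1)] adj_sym[OF to_e[OF j(2)]] j(3) by (metis rtrancl_trans)
qed

lemma two_elems: "finite S \<Longrightarrow> 2 \<le> card S \<Longrightarrow> \<exists>x y. x \<in> S \<and> y \<in> S \<and> x \<noteq> y"
  using card_le_Suc0_iff_eq[of S] by fastforce

lemma tree_char:
  fixes T :: "(nat + nat \<times> nat) set"
  assumes n2: "2 \<le> n" and TE: "T \<subseteq> mwheel_E n a"
    and cdef: "\<And>j. c j \<longleftrightarrow> Inl j \<in> T" and sdef: "\<And>j. s j = {k. Inr (j, k) \<in> T}"
  shows "spanning_tree (mwheel_V n) (mwheel_E n a) (mwheel_ends n) T \<longleftrightarrow> AC n c s"
proof -
  have TInl: "Inl l \<in> T \<Longrightarrow> l < n" for l using TE unfolding mwheel_E_def by auto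
  have TInr: "Inr (l, k) \<in> T \<Longrightarrow> l < n \<and> k < a" for l k using TE unfolding mwheel_E_def by auto
  have fs: "finite (s j)" for j
  proof -
    have "s j \<subseteq> {..<a}" using sdef TInr by auto
    thus ?thesis using finite_subset by blast
  qed
  have ends_r: "mwheel_ends n (Inr (l, k)) = {Some l, None}" for l k by auto
  have rimcl: "\<forall>l. Inl l \<in> F \<longrightarrow> (l \<in> {l. l < n \<and> ee n c l = ee n c j} \<longleftrightarrow> (l+1) mod n \<in> {l. l < n \<and> ee n c l = ee n c j})"
    if cut: "\<exists>m<n. \<not> c m" and FT: "F \<subseteq> T" for F j
  proof (intro allI impI)
    fix l assume "Inl l \<in> F"
    hence l: "l < n" "c l" using FT TInl cdef by auto
    have "ee n c l = ee n c ((l+1) mod n)" using step_C[OF n2 cut l] by simp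
    thus "(l \<in> {l. l < n \<and> ee n c l = ee n c j}) = ((l + 1) mod n \<in> {l. l < n \<and> ee n c l = ee n c j})"
      using l n2 by simp
  qed
  have Fc: "\<forall>i<n. c i \<longrightarrow> Inl i \<in> T - {Inr p}" for p using cdef by auto
  show ?thesis
  proof
    assume st: "spanning_tree (mwheel_V n) (mwheel_E n a) (mwheel_ends n) T"
    have conn: "\<forall>u\<in>mwheel_V n. \<forall>v\<in>mwheel_V n. (u, v) \<in> (adj_rel (mwheel_ends n) T)\<^sup>*"
      and br: "\<forall>e\<in>T. \<forall>u v. mwheel_ends n e = {u, v} \<longrightarrow> (u, v) \<notin> (adj_rel (mwheel_ends n) (T - {e}))\<^sup>*"
      using st unfolding spanning_tree_def by auto
    have cut: "\<exists>m<n. \<not> c m"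
    proof (rule ccontr)
      assume "\<not> (\<exists>m<n. \<not> c m)"
      hence allc: "\<forall>m<n. c m" by simp
      have "\<forall>i<n-1. Inl ((1 + i) mod n) \<in> T - {Inl 0}"
      proof (intro allI impI)
        fix i assume "i < n - 1"
        hence "(1 + i) mod n = 1 + i" "1 + i < n" by auto
        thus "Inl ((1 + i) mod n) \<in> T - {Inl 0}" using allc cdef by simp
      qed
      from rim_path[OF this] have "(Some 1, Some ((1 + (n - 1)) mod n)) \<in> (adj_rel (mwheel_ends n) (T - {Inl 0}))\<^sup>*"
        using n2 by simp
      moreover have "(1 + (n - 1)) mod n = 0" using n2 by simp
      ultimately have "(Some 1, Some 0) \<in> (adj_rel (mwheel_ends n) (T - {Inl 0}))\<^sup>*" by simp
      hence "(Some 0, Some 1) \<in> (adj_rel (mwheel_ends n) (T - {Inl 0}))\<^sup>*" by (rule adj_sym)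
      moreover have "Inl 0 \<in> T" using allc cdef n2 by simp
      moreover have "mwheel_ends n (Inl 0) = {Some 0, Some 1}" using n2 by simp
      ultimately show False using br by blast
    qed
    have "\<forall>j<n. (\<Sum>j'\<in>{j'. j' < n \<and> ee n c j' = ee n c j}. card (s j')) = 1"
    proof (intro allI impI)
      fix j assume j: "j < n"
      define A where "A = {j'. j' < n \<and> ee n c j' = ee n c j}"
      have finA: "finite A" unfolding A_def by simp
      have jA: "j \<in> A" unfolding A_def using j by simp
      have ge: "(\<Sum>j'\<in>A. card (s j')) \<ge> 1"
      proof (rule ccontr)
        assume "\<not> 1 \<le> (\<Sum>j'\<in>A. card (s j'))"
        hence "(\<Sum>j'\<in>A. card (s j')) = 0" by simp
        hence emp: "\<forall>j'\<in>A. s j' = {}" using finA fs by simp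
        have "(Some j, None) \<in> (adj_rel (mwheel_ends n) T)\<^sup>*" using conn j unfolding mwheel_V_def by auto
        moreover have "\<forall>l k. Inr (l, k) \<in> T \<longrightarrow> l \<notin> A" using emp sdef by auto
        moreover have "\<forall>l. Inl l \<in> T \<longrightarrow> (l \<in> A \<longleftrightarrow> (l+1) mod n \<in> A)"
          using rimcl[OF cut order_refl, of j] unfolding A_def by simp
        moreover have "Some j \<in> Some ` A" using jA by simp
        ultimately have "None \<in> Some ` A" using closed_wheel[of T A n "Some j" None] by simp
        thus False by auto
      qed
      have le: "(\<Sum>j'\<in>A. card (s j')) \<le> 1"
      proof (rule ccontr)
        assume "\<not> (\<Sum>j'\<in>A. card (s j')) \<le> 1"
        hence "(\<Sum>j'\<in>A. card (s j')) \<ge> 2" by simp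
        from sum_ge2[OF finA this]
        obtain j1 k1 j2 k2 where p: "j1 \<in> A" "j2 \<in> A" "k1 \<in> s j1" "k2 \<in> s j2" "(j1, k1) \<noteq> (j2, k2)"
        proof (elim disjE bexE conjE)
          fix x assume "x \<in> A" "2 \<le> card (s x)"
          then obtain k1 k2 where "k1 \<in> s x" "k2 \<in> s x" "k1 \<noteq> k2" using two_elems[OF fs] by blast
          then show ?thesis using that \<open>x \<in> A\<close> by blast
        next
          fix x y assume "x \<in> A" "y \<in> A" "x \<noteq> y" "1 \<le> card (s x)" "1 \<le> card (s y)"
          then obtain k1 k2 where "k1 \<in> s x" "k2 \<in> s y"
            by (metis One_nat_def card.empty ex_in_conv not_one_le_zero)
          then show ?thesis using that \<open>x \<in> A\<close> \<open>y \<in> A\<close> \<open>x \<noteq> y\<close> by blast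
        qed
        have j12: "j1 < n" "j2 < n" "ee n c j1 = ee n c j2" using p unfolding A_def by auto
        define e :: "nat + nat \<times> nat" where "e = Inr (j1, k1)"
        have eT: "e \<in> T" unfolding e_def using p sdef by auto
        have "Inr (j2, k2) \<in> T - {e}" using p sdef unfolding e_def by auto
        hence "(None, Some j2) \<in> (adj_rel (mwheel_ends n) (T - {e}))\<^sup>*" by (rule adj_edge) simp
        moreover have "(Some j2, Some j1) \<in> (adj_rel (mwheel_ends n) (T - {e}))\<^sup>*"
          using arc_conn[OF n2 cut Fc[of "(j1, k1)"] j12(2,1)] j12(3) unfolding e_def by simp
        ultimately have "(None, Some j1) \<in> (adj_rel (mwheel_ends n) (T - {e}))\<^sup>*" by (rule rtrancl_trans)
        moreover have "mwheel_ends n e = {None, Some j1}" unfolding e_def by simp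
        ultimately show False using br eT by blast
      qed
      show "(\<Sum>j'\<in>{j'. j' < n \<and> ee n c j' = ee n c j}. card (s j')) = 1"
        using ge le unfolding A_def by simp
    qed
    then show "AC n c s" unfolding AC_def using cut by blast
  next
    assume ac: "AC n c s"
    have cut: "\<exists>m<n. \<not> c m" using ac unfolding AC_def by blast
    have sum1: "(\<Sum>j'\<in>{j'. j' < n \<and> ee n c j' = ee n c j}. card (s j')) = 1" if "j < n" for j
      using ac that unfolding AC_def by blast
    have spoke: "\<exists>j0 k0. j0 < n \<and> ee n c j0 = ee n c j \<and> Inr (j0, k0) \<in> T" if "j < n" for j
    proof -
      have "(\<Sum>j'\<in>{j'. j' < n \<and> ee n c j' = ee n c j}. card (s j')) \<noteq> 0"
        using sum1[OF that] by simp
      then obtain j' where "j' \<in> {j'. j' < n \<and> ee n c j' = ee n c j}" "card (s j') \<noteq> 0"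
        by (rule sum.not_neutral_contains_not_neutral)
      then have "j' < n" "ee n c j' = ee n c j" "s j' \<noteq> {}" by auto
      then show ?thesis using sdef by auto
    qed
    have uq: "j1 = j2 \<and> k1 = k2" if "j < n" "j1 < n" "j2 < n" "ee n c j1 = ee n c j" "ee n c j2 = ee n c j"
      "Inr (j1, k1) \<in> T" "Inr (j2, k2) \<in> T" for j j1 j2 k1 k2
    proof -
      have "k1 \<in> s j1" "k2 \<in> s j2" using that(6,7) sdef by auto
      moreover have "j1 \<in> {j'. j' < n \<and> ee n c j' = ee n c j}" "j2 \<in> {j'. j' < n \<and> ee n c j' = ee n c j}"
        using that by auto
      moreover have fin: "finite {j'. j' < n \<and> ee n c j' = ee n c j}" by simp
      ultimately show ?thesis using sum_one_uniq[of "{j'. j' < n \<and> ee n c j' = ee n c j}" s, OF fin sum1[OF that(1)] fs]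
        by blast
    qed
    have hub: "(Some j, None) \<in> (adj_rel (mwheel_ends n) T)\<^sup>*" if jn: "j < n" for j
    proof -
      obtain j0 k0 where j0: "j0 < n" "ee n c j0 = ee n c j" "Inr (j0, k0) \<in> T" using spoke[OF jn] by blast
      have "(Some j, Some j0) \<in> (adj_rel (mwheel_ends n) T)\<^sup>*"
      proof -
        have FT: "\<forall>i<n. c i \<longrightarrow> Inl i \<in> T" using cdef by simp
        show ?thesis using arc_conn[OF n2 cut FT jn j0(1)] j0(2) by simp
      qed
      moreover have "(Some j0, None) \<in> (adj_rel (mwheel_ends n) T)\<^sup>*"
        using adj_edge[OF j0(3), of "mwheel_ends n" "Some j0" None] ends_r by blast
      ultimately show ?thesis by (rule rtrancl_trans)
    qed
    have hubV: "(u, None) \<in> (adj_rel (mwheel_ends n) T)\<^sup>*" if "u \<in> mwheel_V n" for u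
    proof -
      have "u = None \<or> (\<exists>j. j < n \<and> u = Some j)" using that unfolding mwheel_V_def by auto
      then show ?thesis
      proof (elim disjE exE conjE)
        assume "u = None" then show ?thesis by simp
      next
        fix j assume "j < n" "u = Some j" then show ?thesis using hub[of j] by simp
      qed
    qed
    have conn: "\<forall>u\<in>mwheel_V n. \<forall>v\<in>mwheel_V n. (u, v) \<in> (adj_rel (mwheel_ends n) T)\<^sup>*"
    proof (intro ballI)
      fix u v assume uv: "u \<in> mwheel_V n" "v \<in> mwheel_V n"
      have "(u, None) \<in> (adj_rel (mwheel_ends n) T)\<^sup>*" by (rule hubV[OF uv(1)])
      moreover have "(None, v) \<in> (adj_rel (mwheel_ends n) T)\<^sup>*" by (rule adj_sym[OF hubV[OF uv(2)]])
      ultimately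
      show "(u, v) \<in> (adj_rel (mwheel_ends n) T)\<^sup>*" by (rule rtrancl_trans)
    qed
    have br: "\<forall>e\<in>T. \<forall>u v. mwheel_ends n e = {u, v} \<longrightarrow> (u, v) \<notin> (adj_rel (mwheel_ends n) (T - {e}))\<^sup>*"
    proof (intro ballI allI impI)
      fix e u v assume eT: "e \<in> T" and euv: "mwheel_ends n e = {u, v}"
      show "(u, v) \<notin> (adj_rel (mwheel_ends n) (T - {e}))\<^sup>*"
      proof (cases e)
        case (Inr p)
        then obtain j k where e: "e = Inr (j, k)" by (cases p) auto
        have j: "j < n" using TInr eT e by auto
        let ?A = "{l. l < n \<and> ee n c l = ee n c j}"
        show ?thesis
        proof (rule separated[where A = ?A])
          show "\<forall>l. Inl l \<in> T - {e} \<longrightarrow> (l \<in> ?A) = ((l + 1) mod n \<in> ?A)"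
            using rimcl[OF cut, of "T - {e}" j] by blast
          show "\<forall>l k'. Inr (l, k') \<in> T - {e} \<longrightarrow> l \<notin> ?A"
          proof (intro allI impI)
            fix l k' assume "Inr (l, k') \<in> T - {e}"
            then show "l \<notin> ?A" using uq[OF j, of l j k' k] eT e j by auto
          qed
          show "Some j \<in> Some ` ?A" using j by simp
          show "None \<notin> Some ` ?A" by simp
          show "{Some j, None} = {u, v}" using euv e by auto
        qed
      next
        case (Inl i)
        have i: "i < n" "c i" using TInl eT Inl cdef by auto
        define i' where "i' = (i + 1) mod n"
        have st: "dd n c i = Suc (dd n c i')" "ee n c i = ee n c i'" using step_C[OF n2 cut i] unfolding i'_def by auto
        have i'n: "i' < n" unfolding i'_def using n2 by simp
        obtain j0 k0 where j0: "j0 < n" "ee n c j0 = ee n c i" "Inr (j0, k0) \<in> T" using spoke[OF i(1)] by blast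
        have Inl_cl: "(ee n c l = ee n c i \<and> P (dd n c l)) = (ee n c ((l+1) mod n) = ee n c i \<and> P (dd n c ((l+1) mod n)))"
          if P: "\<And>x. x \<noteq> dd n c i \<Longrightarrow> P x = P (x - 1)" "P (dd n c i) = (\<not> P (dd n c i'))"
          and lF: "Inl l \<in> T - {e}" for l P
        proof -
          have l: "l < n" "c l" "l \<noteq> i" using lF TInl cdef Inl by auto
          have stl: "dd n c l = Suc (dd n c ((l+1) mod n))" "ee n c l = ee n c ((l+1) mod n)"
            using step_C[OF n2 cut l(1,2)] by auto
          show ?thesis
          proof (cases "ee n c l = ee n c i")
            case True
            have "dd n c l \<noteq> dd n c i" using uniq[OF n2 cut l(1) i(1) True] l(3) by blast
            then show ?thesis using P(1)[of "dd n c l"] stl True by simp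
          next
            case False then show ?thesis using stl by simp
          qed
        qed
        show ?thesis
        proof (cases "dd n c j0 \<ge> dd n c i")
          case True
          let ?A = "{l. l < n \<and> ee n c l = ee n c i \<and> dd n c l < dd n c i}"
          show ?thesis
          proof (rule separated[where A = ?A])
            show "\<forall>l. Inl l \<in> T - {e} \<longrightarrow> (l \<in> ?A) = ((l + 1) mod n \<in> ?A)"
            proof (intro allI impI)
              fix l assume lF: "Inl l \<in> T - {e}"
              have "l < n" using lF TInl by auto
              moreover have "(ee n c l = ee n c i \<and> dd n c l < dd n c i) = (ee n c ((l+1) mod n) = ee n c i \<and> dd n c ((l+1) mod n) < dd n c i)"
                by (rule Inl_cl[OF _ _ lF]) (use st in auto)
              ultimately show "(l \<in> ?A) = ((l + 1) mod n \<in> ?A)" using n2 by simp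
            qed
            show "\<forall>l k'. Inr (l, k') \<in> T - {e} \<longrightarrow> l \<notin> ?A"
            proof (intro allI impI)
              fix l k' assume "Inr (l, k') \<in> T - {e}"
              then show "l \<notin> ?A" using uq[OF i(1), of l j0 k' k0] j0 True by auto
            qed
            show "Some i' \<in> Some ` ?A" using i'n st by simp
            show "Some i \<notin> Some ` ?A" by auto
            show "{Some i', Some i} = {u, v}" using euv Inl unfolding i'_def by auto
          qed
        next
          case False
          let ?A = "{l. l < n \<and> ee n c l = ee n c i \<and> dd n c l \<ge> dd n c i}"
          show ?thesis
          proof (rule separated[where A = ?A])
            show "\<forall>l. Inl l \<in> T - {e} \<longrightarrow> (l \<in> ?A) = ((l + 1) mod n \<in> ?A)"
            proof (intro allI impI)
              fix l assume lF: "Inl l \<in> T - {e}"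
              have "l < n" using lF TInl by auto
              moreover have "(ee n c l = ee n c i \<and> dd n c l \<ge> dd n c i) = (ee n c ((l+1) mod n) = ee n c i \<and> dd n c ((l+1) mod n) \<ge> dd n c i)"
                by (rule Inl_cl[OF _ _ lF]) (use st in auto)
              ultimately show "(l \<in> ?A) = ((l + 1) mod n \<in> ?A)" using n2 by simp
            qed
            show "\<forall>l k'. Inr (l, k') \<in> T - {e} \<longrightarrow> l \<notin> ?A"
            proof (intro allI impI)
              fix l k' assume "Inr (l, k') \<in> T - {e}"
              then show "l \<notin> ?A" using uq[OF i(1), of l j0 k' k0] j0 False by auto
            qed
            show "Some i \<in> Some ` ?A" using i by simp
            show "Some i' \<notin> Some ` ?A" using st by auto
            show "{Some i, Some i'} = {u, v}" using euv Inl unfolding i'_def by auto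
          qed
        qed
      qed
    qed
    show "spanning_tree (mwheel_V n) (mwheel_E n a) (mwheel_ends n) T"
      unfolding spanning_tree_def using TE conn br by (intro conjI)
  qed
qed

definition phi :: "nat \<Rightarrow> (nat + nat \<times> nat) set \<Rightarrow> (bool \<times> nat set) list" where
  "phi n T = map (\<lambda>j. (Inl j \<in> T, {k. Inr (j, k) \<in> T})) [0..<n]"

definition psi :: "(bool \<times> nat set) list \<Rightarrow> (nat + nat \<times> nat) set" where
  "psi xs = {Inl j | j. j < length xs \<and> fst (xs ! j)} \<union> {Inr (j, k) | j k. j < length xs \<and> k \<in> snd (xs ! j)}"

lemma phi_inj: "inj_on (phi n) (Pow (mwheel_E n a))"
proof (rule inj_onI)
  fix T1 T2 assume T: "T1 \<in> Pow (mwheel_E n a)" "T2 \<in> Pow (mwheel_E n a)" and eq: "phi n T1 = phi n T2"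
  have nth: "(Inl j \<in> T1, {k. Inr (j, k) \<in> T1}) = (Inl j \<in> T2, {k. Inr (j, k) \<in> T2})" if "j < n" for j
    using arg_cong[OF eq, of "\<lambda>xs. xs ! j"] that unfolding phi_def by simp
  have "x \<in> T1 \<longleftrightarrow> x \<in> T2" for x
  proof (cases x)
    case (Inl j)
    then show ?thesis
    proof (cases "j < n")
      case True then show ?thesis using nth[OF True] Inl by simp
    next
      case False then show ?thesis using T Inl unfolding mwheel_E_def by auto
    qed
  next
    case (Inr p)
    then obtain j k where x: "x = Inr (j, k)" by (cases p) auto
    show ?thesis
    proof (cases "j < n")
      case True
      have "{k. Inr (j, k) \<in> T1} = {k. Inr (j, k) \<in> T2}" using nth[OF True] by simp
      then show ?thesis using x by blast
    next
      case False then show ?thesis using T x unfolding mwheel_E_def by auto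
    qed
  qed
  then show "T1 = T2" by blast
qed

lemma phi_psi: "phi (length xs) (psi xs) = xs"
proof (rule nth_equalityI)
  show "length (phi (length xs) (psi xs)) = length xs" unfolding phi_def by simp
  fix j assume "j < length (phi (length xs) (psi xs))"
  hence j: "j < length xs" unfolding phi_def by simp
  have "Inl j \<in> psi xs \<longleftrightarrow> fst (xs ! j)" unfolding psi_def using j by auto
  moreover have "{k. Inr (j, k) \<in> psi xs} = snd (xs ! j)" unfolding psi_def using j by auto
  ultimately show "phi (length xs) (psi xs) ! j = xs ! j" unfolding phi_def using j by (simp add: prod_eq_iff)
qed

lemma trees_image:
  assumes n2: "2 \<le> n"
  shows "phi n ` {T. spanning_tree (mwheel_V n) (mwheel_E n a) (mwheel_ends n) T} = Gd n a"
proof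
  show "phi n ` {T. spanning_tree (mwheel_V n) (mwheel_E n a) (mwheel_ends n) T} \<subseteq> Gd n a"
  proof
    fix xs assume "xs \<in> phi n ` {T. spanning_tree (mwheel_V n) (mwheel_E n a) (mwheel_ends n) T}"
    then obtain T where st: "spanning_tree (mwheel_V n) (mwheel_E n a) (mwheel_ends n) T" and xs: "xs = phi n T" by blast
    have TE: "T \<subseteq> mwheel_E n a" using st unfolding spanning_tree_def by simp
    define c where "c = (\<lambda>j. Inl j \<in> T)"
    define s where "s = (\<lambda>j. {k. Inr (j, k) \<in> T})"
    have ac: "AC n c s" using tree_char[OF n2 TE, of c s] st unfolding c_def s_def by simp
    have sa: "s j \<subseteq> {..<a}" for j using TE unfolding s_def mwheel_E_def by auto
    have fs: "finite (s j)" for j using sa finite_subset by blast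
    have cut: "\<exists>m<n. \<not> c m" using ac unfolding AC_def by blast
    have xs': "xs = map (\<lambda>j. (c j, s j)) [0..<n]" unfolding xs phi_def c_def s_def by simp
    obtain i where "runs i (map (\<lambda>j. (c j, s j)) [0..<n]) = Some i" using AC_imp_runs[OF n2 cut fs ac] by blast
    moreover have "xs \<in> Ls n a" unfolding Ls_def Loc_def xs' using sa by auto
    moreover have "\<exists>x\<in>set xs. \<not> fst x" using cut unfolding xs' by auto
    ultimately show "xs \<in> Gd n a" unfolding Gd_def xs' by auto
  qed
next
  show "Gd n a \<subseteq> phi n ` {T. spanning_tree (mwheel_V n) (mwheel_E n a) (mwheel_ends n) T}"
  proof
    fix xs assume xg: "xs \<in> Gd n a"
    then have len: "length xs = n" and sl: "set xs \<subseteq> Loc a" and cx: "\<exists>x\<in>set xs. \<not> fst x"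
      and r: "\<exists>i. runs i xs = Some i" unfolding Gd_def Ls_def by auto
    define T where "T = psi xs"
    have px: "phi n T = xs" unfolding T_def using phi_psi[of xs] len by simp
    have TE: "T \<subseteq> mwheel_E n a"
    proof
      fix x assume "x \<in> T"
      then consider j where "x = Inl j" "j < n" | j k where "x = Inr (j, k)" "j < n" "k \<in> snd (xs ! j)"
        unfolding T_def psi_def len by auto
      then show "x \<in> mwheel_E n a"
      proof cases
        case 1 then show ?thesis unfolding mwheel_E_def by auto
      next
        case 2
        have "xs ! j \<in> Loc a" using sl 2 len by auto
        hence "k < a" using 2 unfolding Loc_def by auto
        then show ?thesis using 2 unfolding mwheel_E_def by auto
      qed
    qed
    define c where "c = (\<lambda>j. Inl j \<in> T)"
    define s where "s = (\<lambda>j. {k. Inr (j, k) \<in> T})"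
    have fs: "finite (s j)" for j
    proof -
      have "s j \<subseteq> {..<a}" using TE unfolding s_def mwheel_E_def by auto
      thus ?thesis using finite_subset by blast
    qed
    have xs': "xs = map (\<lambda>j. (c j, s j)) [0..<n]" using px unfolding phi_def c_def s_def by simp
    have cut: "\<exists>m<n. \<not> c m"
    proof -
      obtain x where "x \<in> set xs" "\<not> fst x" using cx by blast
      then obtain m where "m < n" "xs ! m = x" using len by (metis in_set_conv_nth)
      then show ?thesis using \<open>\<not> fst x\<close> unfolding xs' by auto
    qed
    obtain i where "runs i (map (\<lambda>j. (c j, s j)) [0..<n]) = Some i" using r xs' by auto
    hence "AC n c s" by (rule runs_imp_AC[OF n2 cut fs])
    hence "spanning_tree (mwheel_V n) (mwheel_E n a) (mwheel_ends n) T"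
      using tree_char[OF n2 TE, of c s] unfolding c_def s_def by simp
    then show "xs \<in> phi n ` {T. spanning_tree (mwheel_V n) (mwheel_E n a) (mwheel_ends n) T}"
      using px by blast
  qed
qed

theorem theorem5p10:
  fixes n a :: nat
  assumes "a \<ge> 1" and "n \<ge> 2"
  shows "int (num_spanning_trees (mwheel_V n) (mwheel_E n a) (mwheel_ends n))
           = int a * Wpoly (n - 1) (int a)
       \<and> (a = 1 \<longrightarrow>
           int (num_spanning_trees (mwheel_V n) (mwheel_E n a) (mwheel_ends n))
             = lucas (2 * n) - 2)"
proof -
  let ?Tr = "{T. spanning_tree (mwheel_V n) (mwheel_E n a) (mwheel_ends n) T}"
  have sub: "?Tr \<subseteq> Pow (mwheel_E n a)" unfolding spanning_tree_def by auto
  have "card ?Tr = card (phi n ` ?Tr)" using inj_on_subset[OF phi_inj sub] by (simp add: card_image)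
  also have "\<dots> = card (Gd n a)" using trees_image[OF assms(2)] by simp
  finally have "int (num_spanning_trees (mwheel_V n) (mwheel_E n a) (mwheel_ends n)) = tr (int a) n - 2"
    unfolding num_spanning_trees_def using Gd_count[of n a] unfolding tr_def by simp
  moreover have "tr (int a) n - 2 = int a * Wpoly (n - 1) (int a)"
    using tr_W[of "int a" "n - 1"] assms(2) by simp
  moreover have "tr 1 n = lucas (2 * n)" by (rule tr_lucas)
  ultimately show ?thesis by auto
qed


end
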